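(* Skeptic can weakly force the event \[ E_4:=\Bigl\{\xi:\ \limsup_{n\to\infty}|s_n|<\infty\ \ \text{or}\ \ \bigl(\limsup_{n\to\infty}s_n=\infty\ \text{and}\ \liminf_{n\to\infty}s_n=-\infty\bigr)\Bigr\}. \]
   Context: Fair-coin game: in rounds $n=1,2,\dots$ Skeptic announces $M_n\in\mathbb{R}$ (depending only on $x_1,\dots,x_{n-1}$), then Reality announces $x_n\in\{-1,1\}$. A path is an infinite sequence $\xi=x_1x_2\cdots\in\{-1,1\}^{\mathbb{N}}$, and $\Omega$ is the set of paths. We write $s_n:=x_1+\cdots+x_n$, with $s_0=0$. The capital process of a strategy with zero initial capital is $\mathcal{K}^{\mathcal{P}}_n=\sum_{k=1}^nM_kx_k$. Skeptic weakly forces $E\subseteq\Omega$ if some strategy $\mathcal{P}$ has $\mathcal{K}^{\mathcal{P}}_n(\xi)\ge-1$ for all $\xi\in\Omega$ and $n\ge0$, and $\limsup_n\mathcal{K}^{\mathcal{P}}_n(\xi)=\infty$ for every $\xi\notin E$. *)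

theory Defs
  imports "HOL-Analysis.Analysis"
begin

text \<open>A path is a sequence xi with xi k = x_(k+1) in {-1,1} (0-based indexing of rounds).\<close>
definition paths :: "(nat \<Rightarrow> real) set" where
  "paths = {xi. \<forall>k. xi k \<in> {-1, 1}}"

definition psum :: "(nat \<Rightarrow> real) \<Rightarrow> nat \<Rightarrow> real" where
  "psum xi n = (\<Sum>k<n. xi k)"

text \<open>A strategy maps the history (x_1,...,x_(n-1)) to the move M_n.
  Capital with zero initial capital: K_n = sum_(k=1)^n M_k x_k.\<close>
definition capital :: "(real list \<Rightarrow> real) \<Rightarrow> (nat \<Rightarrow> real) \<Rightarrow> nat \<Rightarrow> real" where
  "capital P xi n = (\<Sum>k<n. P (map xi [0..<k]) * xi k)"

definition weakly_forces :: "(nat \<Rightarrow> real) set \<Rightarrow> bool" where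
  "weakly_forces E \<longleftrightarrow> (\<exists>P :: real list \<Rightarrow> real.
     (\<forall>xi\<in>paths. \<forall>n. capital P xi n \<ge> -1) \<and>
     (\<forall>xi\<in>paths. xi \<notin> E \<longrightarrow> limsup (\<lambda>n. ereal (capital P xi n)) = \<infinity>))"

definition E4 :: "(nat \<Rightarrow> real) set" where
  "E4 = {xi. limsup (\<lambda>n. ereal \<bar>psum xi n\<bar>) < \<infinity> \<or>
             (limsup (\<lambda>n. ereal (psum xi n)) = \<infinity> \<and> liminf (\<lambda>n. ereal (psum xi n)) = -\<infinity>)}"

end

theory Submission
  imports Defs
begin

definition gg :: "real \<Rightarrow> real" where "gg L = 1 / ((L + 1) * (L + 2))"

fun Lo :: "(nat \<Rightarrow> real) \<Rightarrow> nat \<Rightarrow> real" where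
  "Lo xi 0 = 0"
| "Lo xi (Suc n) = max (Lo xi n) (- psum xi (Suc n))"

definition CA :: "(nat \<Rightarrow> real) \<Rightarrow> nat \<Rightarrow> real" where
  "CA xi n = (\<Sum>k<n. gg (Lo xi k) * xi k)"

definition Pstr :: "real list \<Rightarrow> real" where
  "Pstr h = (gg (Lo (\<lambda>i. h ! i) (length h)) - gg (Lo (\<lambda>i. - (h ! i)) (length h))) / 2"

lemma Lo_cong: "(\<forall>i<n. f i = h i) \<Longrightarrow> Lo f n = Lo h n"
proof (induction n)
  case 0 then show ?case by simp
next
  case (Suc n)
  have "psum f (Suc n) = psum h (Suc n)" unfolding psum_def using Suc.prems by (intro sum.cong) auto
  then show ?case using Suc by simp
qed

lemma capital_eq: "capital Pstr xi n = (CA xi n + CA (\<lambda>i. - xi i) n) / 2"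
proof -
  have "Pstr (map xi [0..<k]) = (gg (Lo xi k) - gg (Lo (\<lambda>i. - xi i) k)) / 2" for k
  proof -
    have "Lo (\<lambda>i. map xi [0..<k] ! i) k = Lo xi k" by (rule Lo_cong) simp
    moreover have "Lo (\<lambda>i. - (map xi [0..<k] ! i)) k = Lo (\<lambda>i. - xi i) k" by (rule Lo_cong) simp
    ultimately show ?thesis unfolding Pstr_def by simp
  qed
  note eq = this
  have "Pstr (map xi [0..<k]) * xi k = (gg (Lo xi k) * xi k + gg (Lo (\<lambda>i. - xi i) k) * (- xi k)) / 2" for k
    by (subst eq) (simp add: algebra_simps)
  then have "capital Pstr xi n = (\<Sum>k<n. (gg (Lo xi k) * xi k + gg (Lo (\<lambda>i. - xi i) k) * (- xi k)) / 2)"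
    unfolding capital_def by (intro sum.cong) (simp_all only:)
  also have "\<dots> = (CA xi n + CA (\<lambda>i. - xi i) n) / 2"
    unfolding CA_def sum_divide_distrib[symmetric] sum.distrib by simp
  finally show ?thesis .
qed

lemma psum_Suc: "psum xi (Suc n) = psum xi n + xi n"
  unfolding psum_def by simp

lemma invariant:
  assumes "xi \<in> paths"
  shows "Lo xi n \<in> \<int> \<and> psum xi n \<in> \<int> \<and> 0 \<le> Lo xi n \<and> 0 \<le> psum xi n + Lo xi n \<and>
    CA xi n = (psum xi n + Lo xi n) / ((Lo xi n + 1) * (Lo xi n + 2)) - 1 + 1 / (Lo xi n + 1)"
proof (induction n)
  case 0
  then show ?case by (simp add: CA_def psum_def)
next
  case (Suc n)
  define L where "L = Lo xi n"
  define s where "s = psum xi n"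
  define x where "x = xi n"
  have x: "x = -1 \<or> x = 1" using assms unfolding paths_def x_def by auto
  have IH: "L \<in> \<int>" "s \<in> \<int>" "0 \<le> L" "0 \<le> s + L"
    "CA xi n = (s + L) / ((L + 1) * (L + 2)) - 1 + 1 / (L + 1)"
    using Suc unfolding L_def s_def by auto
  have ps: "psum xi (Suc n) = s + x" unfolding s_def x_def psum_Suc ..
  have ca: "CA xi (Suc n) = CA xi n + gg L * x" unfolding CA_def L_def x_def by simp
  have xi: "x \<in> \<int>" using x by auto
  show ?case
  proof (cases "0 \<le> s + x + L")
    case True
    then have lo: "Lo xi (Suc n) = L" using ps L_def by simp
    have "CA xi (Suc n) = (s + L) / ((L + 1) * (L + 2)) + x / ((L + 1) * (L + 2)) - 1 + 1 / (L + 1)"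
      using ca IH(5) unfolding gg_def by simp
    also have "(s + L) / ((L + 1) * (L + 2)) + x / ((L + 1) * (L + 2)) = (s + x + L) / ((L + 1) * (L + 2))"
      by (simp add: add_divide_distrib[symmetric] algebra_simps)
    finally have "CA xi (Suc n) = (s + x + L) / ((L + 1) * (L + 2)) - 1 + 1 / (L + 1)" .
    then show ?thesis using lo ps IH True xi by auto
  next
    case False
    then have xm: "x = -1" using x IH by auto
    have "s + L \<in> \<int>" using IH by auto
    then obtain z where z: "s + L = of_int z" by (auto elim: Ints_cases)
    have "z = 0" using z IH(4) False xm by linarith
    then have sL: "s + L = 0" using z by simp
    then have lo: "Lo xi (Suc n) = L + 1" using ps L_def xm by simp
    have "CA xi (Suc n) = - 1 + (1 / (L + 1) - 1 / ((L + 1) * (L + 2)))"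
      using ca IH(5) sL xm unfolding gg_def by simp
    also have "1 / (L + 1) - 1 / ((L + 1) * (L + 2)) = 1 / (L + 2)"
    proof -
      have "L + 1 > 0" "L + 2 > 0" using IH(3) by auto
      have a: "1 / (L + 1) = (L + 2) / ((L + 1) * (L + 2))" using \<open>L + 2 > 0\<close> by simp
      have "1 / (L + 1) - 1 / ((L + 1) * (L + 2)) = ((L + 2) - 1) / ((L + 1) * (L + 2))"
        unfolding a diff_divide_distrib ..
      also have "(L + 2) - 1 = L + 1" by simp
      also have "(L + 1) / ((L + 1) * (L + 2)) = 1 / (L + 2)"
        using \<open>L + 1 > 0\<close> by (intro nonzero_divide_mult_cancel_left) simp
      finally show ?thesis .
    qed
    finally have "CA xi (Suc n) = - 1 + 1 / (L + 2)" .
    then show ?thesis using lo ps IH sL xm by auto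
  qed
qed

lemma CA_ge: "xi \<in> paths \<Longrightarrow> CA xi n \<ge> -1"
proof -
  assume a: "xi \<in> paths"
  define L where "L = Lo xi n"
  have I: "0 \<le> L" "0 \<le> psum xi n + L"
    "CA xi n = (psum xi n + L) / ((L + 1) * (L + 2)) - 1 + 1 / (L + 1)"
    using invariant[OF a, of n] unfolding L_def by auto
  have "0 \<le> (psum xi n + L) / ((L + 1) * (L + 2))" using I by simp
  moreover have "0 \<le> 1 / (L + 1)" using I by simp
  ultimately show ?thesis using I(3) by linarith
qed

lemma neg_paths: "xi \<in> paths \<Longrightarrow> (\<lambda>i. - xi i) \<in> paths"
  unfolding paths_def by auto

lemma Lo_bound: "0 \<le> B \<Longrightarrow> (\<forall>k. psum xi k \<ge> -B) \<Longrightarrow> Lo xi m \<le> B"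
proof (induction m)
  case (Suc m)
  have h1: "psum xi (Suc m) \<ge> -B" using Suc.prems(2) by blast
  have h2: "Lo xi m \<le> B" using Suc by blast
  show ?case unfolding Lo.simps max.bounded_iff using h1 h2 by (intro conjI) linarith+
qed simp

lemma CA_lower:
  assumes "xi \<in> paths" "0 \<le> B" "\<forall>k. psum xi k \<ge> -B" "psum xi n \<ge> 0"
  shows "CA xi n \<ge> psum xi n / ((B + 1) * (B + 2)) - 1"
proof -
  define L where "L = Lo xi n"
  have I: "0 \<le> L" "0 \<le> psum xi n + L"
    "CA xi n = (psum xi n + L) / ((L + 1) * (L + 2)) - 1 + 1 / (L + 1)"
    using invariant[OF assms(1), of n] unfolding L_def by auto
  have LB: "L \<le> B" using Lo_bound assms(2,3) L_def by blast
  have "(L + 1) * (L + 2) \<le> (B + 1) * (B + 2)" using LB I(1) by (intro mult_mono) auto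
  then have "psum xi n / ((B + 1) * (B + 2)) \<le> (psum xi n + L) / ((L + 1) * (L + 2))"
    using I(1) assms(4) by (intro frac_le) auto
  moreover have "0 \<le> 1 / (L + 1)" using I(1) by simp
  ultimately show ?thesis using I(3) by linarith
qed

lemma limsup_infI:
  assumes "\<And>M N. \<exists>n\<ge>N. f n \<ge> M"
  shows "limsup (\<lambda>n. ereal (f n)) = \<infinity>"
proof -
  have "(SUP m\<in>{N..}. ereal (f m)) = \<infinity>" for N
  proof -
    have "\<forall>x<top. \<exists>i\<in>{N..}. x < ereal (f i)"
    proof (intro allI impI)
      fix x :: ereal assume "x < top"
      have "\<exists>r. x < ereal r"
      proof (cases x)
        case (real r) then show ?thesis by (intro exI[of _ "r + 1"]) simp
      next
        case PInf then show ?thesis using \<open>x < top\<close> by simp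
      next
        case MInf then show ?thesis by simp
      qed
      then obtain r where r: "x < ereal r" by blast
      obtain n where "n \<ge> N" "f n \<ge> r + 1" using assms by blast
      then show "\<exists>i\<in>{N..}. x < ereal (f i)" using r
        by (intro bexI[of _ n]) (auto intro: less_le_trans)
    qed
    then show ?thesis using SUP_eq_top_iff by (metis top_ereal_def)
  qed
  then show ?thesis unfolding limsup_INF_SUP by simp
qed

lemma limsup_infD:
  assumes "limsup (\<lambda>n. ereal (f n)) = \<infinity>"
  shows "\<exists>n\<ge>N. f n > M"
proof -
  have "(INF n. SUP m\<in>{n..}. ereal (f m)) = \<infinity>"
    using assms unfolding limsup_INF_SUP .
  then have "(SUP m\<in>{N..}. ereal (f m)) = \<infinity>"
    using INF_top_conv(1)[of "\<lambda>n. SUP m\<in>{n..}. ereal (f m)" UNIV] by (simp add: top_ereal_def)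
  then have "\<forall>x. x \<noteq> \<infinity> \<longrightarrow> (\<exists>i\<in>{N..}. x < ereal (f i))"
    using SUP_eq_top_iff[of "\<lambda>m. ereal (f m)" "{N..}"] by (simp add: top_ereal_def)
  then have "ereal M \<noteq> \<infinity> \<longrightarrow> (\<exists>i\<in>{N..}. ereal M < ereal (f i))" by (rule spec)
  then have "\<exists>i\<in>{N..}. M < f i" by simp
  then show ?thesis by auto
qed

lemma liminf_bdd:
  assumes "liminf (\<lambda>n. ereal (f n)) \<noteq> -\<infinity>"
  shows "\<exists>N r. \<forall>m\<ge>N. r \<le> f m"
proof -
  have "\<exists>N. (INF m\<in>{N..}. ereal (f m)) \<noteq> -\<infinity>"
  proof (rule ccontr)
    assume "\<not> ?thesis"
    then have "\<forall>N\<in>UNIV. (INF m\<in>{N..}. ereal (f m)) = bot" by (simp add: bot_ereal_def)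
    then have "(SUP N. INF m\<in>{N..}. ereal (f m)) = bot"
      using SUP_bot_conv(1)[of "\<lambda>N. INF m\<in>{N..}. ereal (f m)" UNIV] by blast
    then show False using assms unfolding liminf_SUP_INF by (simp add: bot_ereal_def)
  qed
  then obtain N where N: "(INF m\<in>{N..}. ereal (f m)) \<noteq> -\<infinity>" by blast
  then obtain r where r: "ereal r \<le> (INF m\<in>{N..}. ereal (f m))"
    by (cases "(INF m\<in>{N..}. ereal (f m))") auto
  have "\<forall>m\<ge>N. r \<le> f m"
  proof (intro allI impI)
    fix m assume "N \<le> m"
    then have "(INF m\<in>{N..}. ereal (f m)) \<le> ereal (f m)" by (intro INF_lower) auto
    from order_trans[OF r this] show "r \<le> f m" by simp
  qed
  then show ?thesis by blast
qed

lemma limsup_bdd: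
  assumes "limsup (\<lambda>n. ereal (f n)) \<noteq> \<infinity>"
  shows "\<exists>N r. \<forall>m\<ge>N. f m \<le> r"
proof -
  have "\<exists>N. (SUP m\<in>{N..}. ereal (f m)) \<noteq> \<infinity>"
  proof (rule ccontr)
    assume "\<not> ?thesis"
    then have "\<forall>N\<in>UNIV. (SUP m\<in>{N..}. ereal (f m)) = top" by (simp add: top_ereal_def)
    then have "(INF N. SUP m\<in>{N..}. ereal (f m)) = top"
      using INF_top_conv(1)[of "\<lambda>N. SUP m\<in>{N..}. ereal (f m)" UNIV] by blast
    then show False using assms unfolding limsup_INF_SUP by (simp add: top_ereal_def)
  qed
  then obtain N where N: "(SUP m\<in>{N..}. ereal (f m)) \<noteq> \<infinity>" by blast
  then obtain r where r: "(SUP m\<in>{N..}. ereal (f m)) \<le> ereal r"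
    by (cases "(SUP m\<in>{N..}. ereal (f m))") auto
  have "\<forall>m\<ge>N. f m \<le> r"
  proof (intro allI impI)
    fix m assume "N \<le> m"
    then have "ereal (f m) \<le> (SUP m\<in>{N..}. ereal (f m))" by (intro SUP_upper) auto
    from order_trans[OF this r] show "f m \<le> r" by simp
  qed
  then show ?thesis by blast
qed

lemma psum_abs: "xi \<in> paths \<Longrightarrow> \<bar>psum xi m\<bar> \<le> m"
proof (induction m)
  case 0 then show ?case by (simp add: psum_def)
next
  case (Suc m)
  have "xi m = -1 \<or> xi m = 1" using Suc.prems unfolding paths_def by blast
  then have "\<bar>xi m\<bar> \<le> 1" by auto
  then show ?case using Suc psum_Suc[of xi m] by simp
qed

lemma global_lower:
  assumes "xi \<in> paths" "\<forall>m\<ge>N. r \<le> psum xi m"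
  shows "\<exists>B\<ge>0. \<forall>k. psum xi k \<ge> -B"
proof (intro exI[of _ "max (real N) (- r)"] conjI allI)
  fix k
  show "psum xi k \<ge> - max (real N) (- r)"
  proof (cases "k \<ge> N")
    case True then show ?thesis using assms(2) by force
  next
    case False then show ?thesis using psum_abs[OF assms(1), of k] by auto
  qed
qed auto

lemma main_case:
  assumes p: "xi \<in> paths" and B: "0 \<le> B" "\<forall>k. psum xi k \<ge> -B"
    and U: "\<And>M N. \<exists>n\<ge>N. \<bar>psum xi n\<bar> > M"
  shows "limsup (\<lambda>n. ereal (capital Pstr xi n)) = \<infinity>"
proof (rule limsup_infI)
  fix M N
  define C where "C = (B + 1) * (B + 2)"
  have C: "C > 0" using B unfolding C_def by simp
  obtain n where n: "n \<ge> N" "\<bar>psum xi n\<bar> > max B (C * (2 * M + 2))" using U by blast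
  have "psum xi n \<ge> -B" using B(2) by blast
  then have s: "psum xi n \<ge> 0" "psum xi n > C * (2 * M + 2)" using n(2) by (cases "psum xi n \<ge> 0"; auto)+
  have "CA xi n \<ge> psum xi n / C - 1" using CA_lower[OF p B s(1)] C_def by simp
  moreover have "psum xi n / C > 2 * M + 2" using s C by (simp add: field_simps)
  moreover have "CA (\<lambda>i. - xi i) n \<ge> -1" using CA_ge neg_paths p by blast
  ultimately have "CA xi n + CA (\<lambda>i. - xi i) n \<ge> 2 * M" by linarith
  then have "capital Pstr xi n \<ge> M" unfolding capital_eq by simp
  then show "\<exists>n\<ge>N. capital Pstr xi n \<ge> M" using n by blast
qed

lemma psum_neg: "psum (\<lambda>i. - xi i) n = - psum xi n"
  unfolding psum_def by (simp add: sum_negf)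

lemma capital_neg: "capital Pstr (\<lambda>i. - xi i) n = capital Pstr xi n"
  unfolding capital_eq by simp

theorem corollary2:
  shows "weakly_forces E4"
  unfolding weakly_forces_def
proof (intro exI[of _ Pstr] conjI ballI allI impI)
  fix xi n assume p: "xi \<in> paths"
  show "capital Pstr xi n \<ge> -1" unfolding capital_eq
    using CA_ge[OF p, of n] CA_ge[OF neg_paths[OF p], of n] by simp
next
  fix xi assume p: "xi \<in> paths" and nE: "xi \<notin> E4"
  have U0: "limsup (\<lambda>n. ereal \<bar>psum xi n\<bar>) = \<infinity>" using nE unfolding E4_def by auto
  have U: "\<exists>n\<ge>N. \<bar>psum xi n\<bar> > M" for M N using limsup_infD[OF U0] .
  have "liminf (\<lambda>n. ereal (psum xi n)) \<noteq> -\<infinity> \<or> limsup (\<lambda>n. ereal (psum xi n)) \<noteq> \<infinity>"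
    using nE unfolding E4_def by auto
  then show "limsup (\<lambda>n. ereal (capital Pstr xi n)) = \<infinity>"
  proof
    assume "liminf (\<lambda>n. ereal (psum xi n)) \<noteq> -\<infinity>"
    then obtain N r where "\<forall>m\<ge>N. r \<le> psum xi m" using liminf_bdd by blast
    then obtain B where "B \<ge> 0" "\<forall>k. psum xi k \<ge> -B" using global_lower[OF p] by blast
    then show ?thesis using main_case[OF p _ _ U] by blast
  next
    assume "limsup (\<lambda>n. ereal (psum xi n)) \<noteq> \<infinity>"
    then obtain N r where "\<forall>m\<ge>N. psum xi m \<le> r" using limsup_bdd by blast
    then have "\<forall>m\<ge>N. - r \<le> psum (\<lambda>i. - xi i) m" by (simp add: psum_neg)
    then obtain B where "B \<ge> 0" "\<forall>k. psum (\<lambda>i. - xi i) k \<ge> -B"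
      using global_lower[OF neg_paths[OF p]] by blast
    moreover have "\<exists>n\<ge>N. \<bar>psum (\<lambda>i. - xi i) n\<bar> > M" for M N using U by (simp add: psum_neg)
    ultimately have "limsup (\<lambda>n. ereal (capital Pstr (\<lambda>i. - xi i) n)) = \<infinity>"
      using main_case[OF neg_paths[OF p]] by blast
    then show ?thesis by (simp add: capital_neg)
  qed
qed

end
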